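(* Let $A$ be an essential arrangement of affine hyperplanes in a real affine space $V$, $f_0$ a non-constant affine-linear function on $V$, and for $t>0$ let $f_t=1-f_0/t$, $H_t=\{f_t=0\}$, $A_t=A\cup\{H_t\}$. Let $t$ be large enough that the bounded domains of $A_t$ correspond bijectively to the bounded or growing domains of $A$. Let $\Delta_t$ be a bounded domain of $A_t$ and $\Delta$ the corresponding bounded or growing domain of $A$. If $f_t>0$ on $\Delta_t$, let $g_t$ be the positive branch of $(1-f_0/t)^t$ on $\Delta_t$. Then: - the external support of $\Delta_t$ with respect to $f_t$ is a face of the arrangement $A$; - for every sufficiently large $t$ this external support coincides with the support face $\Sigma_\Delta$ of $f_0$ on $\Delta$; - $\lim_{t\to+\infty}c(g_t,\Delta_t)=e^{-f_0(\Sigma_\Delta)}$.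
   Context: $A$ is a finite set of affine hyperplanes in $V$ with at least one vertex (a point which is an intersection of some of them). Domains and faces of an arrangement: domains are the components of the complement of the union of its hyperplanes; faces are the components of $F$ minus the hyperplanes not containing $F$, for edges $F$ (nonempty intersections). A domain is growing if it is unbounded and $f_0\to+\infty$ at infinity within it. For all large $t$ the bounded domains of $A_t$ are the bounded domains of $A$ together with the sets $\Delta\cap\{f_0<t\}$ for growing domains $\Delta$ of $A$; the correspondence sends a bounded $\Delta$ to itself and a growing $\Delta$ to $\Delta\cap\{f_0<t\}$. For a bounded or growing domain $\Delta$, $f_0$ attains its minimum on $\bar\Delta$; this minimum set is a union of faces of $A$, and the unique one of highest dimension is the support face $\Sigma_\Delta$. For a bounded domain $D$ of an arrangement and an affine function $g$ bounded on $D$, the set of points of $\bar D$ where $|g|$ attains its maximum is a union of faces on which $g$ is constant; the unique one of highest dimension is the external support of $D$ with respect to $g$. For a branch $\tilde g$ of a power of $g$ on $D$, $c(\tilde g,D)$ is the value of (the continuous extension of) $\tilde g$ on that external support. *)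

theory Defs
  imports "HOL-Analysis.Analysis"
begin

definition affine_hyperplane :: "'a::euclidean_space set \<Rightarrow> bool" where
  "affine_hyperplane H \<longleftrightarrow> (\<exists>a b. a \<noteq> 0 \<and> H = {x. a \<bullet> x = b})"

definition arrangement :: "'a::euclidean_space set set \<Rightarrow> bool" where
  "arrangement A \<longleftrightarrow> finite A \<and> (\<forall>H\<in>A. affine_hyperplane H)"

text \<open>Edges: nonempty intersections of subfamilies (the empty subfamily gives the whole space).\<close>
definition edges :: "'a::euclidean_space set set \<Rightarrow> 'a set set" where
  "edges A = {\<Inter>B | B. B \<subseteq> A \<and> \<Inter>B \<noteq> {}}"

definition essential :: "'a::euclidean_space set set \<Rightarrow> bool" where
  "essential A \<longleftrightarrow> (\<exists>x. {x} \<in> edges A)"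

definition domains :: "'a::euclidean_space set set \<Rightarrow> 'a set set" where
  "domains A = components (UNIV - \<Union>A)"

definition faces :: "'a::euclidean_space set set \<Rightarrow> 'a set set" where
  "faces A = (\<Union>F\<in>edges A. components (F - \<Union>{H\<in>A. \<not> F \<subseteq> H}))"

definition affine_nonconst :: "('a::euclidean_space \<Rightarrow> real) \<Rightarrow> bool" where
  "affine_nonconst f \<longleftrightarrow> (\<exists>c d. c \<noteq> 0 \<and> f = (\<lambda>x. c \<bullet> x + d))"

definition growing :: "'a::euclidean_space set set \<Rightarrow> ('a \<Rightarrow> real) \<Rightarrow> 'a set \<Rightarrow> bool" where
  "growing A f0 D \<longleftrightarrow> D \<in> domains A \<and> \<not> bounded D \<and>
     (\<forall>M. \<exists>R. \<forall>x\<in>D. norm x \<ge> R \<longrightarrow> f0 x \<ge> M)"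

definition bdd_or_growing :: "'a::euclidean_space set set \<Rightarrow> ('a \<Rightarrow> real) \<Rightarrow> 'a set set" where
  "bdd_or_growing A f0 = {D \<in> domains A. bounded D \<or> growing A f0 D}"

definition bounded_domains :: "'a::euclidean_space set set \<Rightarrow> 'a set set" where
  "bounded_domains A = {D \<in> domains A. bounded D}"

definition ft :: "('a::euclidean_space \<Rightarrow> real) \<Rightarrow> real \<Rightarrow> 'a \<Rightarrow> real" where
  "ft f0 t x = 1 - f0 x / t"

definition Ht :: "('a::euclidean_space \<Rightarrow> real) \<Rightarrow> real \<Rightarrow> 'a set" where
  "Ht f0 t = {x. ft f0 t x = 0}"

definition At :: "'a::euclidean_space set set \<Rightarrow> ('a \<Rightarrow> real) \<Rightarrow> real \<Rightarrow> 'a set set" where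
  "At A f0 t = insert (Ht f0 t) A"

definition corr :: "('a::euclidean_space \<Rightarrow> real) \<Rightarrow> real \<Rightarrow> 'a set \<Rightarrow> 'a set" where
  "corr f0 t D = (if bounded D then D else D \<inter> {x. f0 x < t})"

definition large_enough :: "'a::euclidean_space set set \<Rightarrow> ('a \<Rightarrow> real) \<Rightarrow> real \<Rightarrow> bool" where
  "large_enough A f0 t \<longleftrightarrow> t > 0 \<and>
     bij_betw (corr f0 t) (bdd_or_growing A f0) (bounded_domains (At A f0 t))"

definition min_set :: "('a::euclidean_space \<Rightarrow> real) \<Rightarrow> 'a set \<Rightarrow> 'a set" where
  "min_set f0 D = {x \<in> closure D. \<forall>y\<in>closure D. f0 x \<le> f0 y}"

definition support_face :: "'a::euclidean_space set set \<Rightarrow> ('a \<Rightarrow> real) \<Rightarrow> 'a set \<Rightarrow> 'a set" where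
  "support_face A f0 D = (THE F. F \<in> faces A \<and> F \<subseteq> min_set f0 D \<and>
      (\<forall>G\<in>faces A. G \<subseteq> min_set f0 D \<and> G \<noteq> F \<longrightarrow> aff_dim G < aff_dim F))"

definition max_abs_set :: "('a::euclidean_space \<Rightarrow> real) \<Rightarrow> 'a set \<Rightarrow> 'a set" where
  "max_abs_set g D = {x \<in> closure D. \<forall>y\<in>closure D. \<bar>g y\<bar> \<le> \<bar>g x\<bar>}"

definition ext_support :: "'a::euclidean_space set set \<Rightarrow> 'a set \<Rightarrow> ('a \<Rightarrow> real) \<Rightarrow> 'a set" where
  "ext_support B D g = (THE F. F \<in> faces B \<and> F \<subseteq> max_abs_set g D \<and>
      (\<exists>v. \<forall>x\<in>F. g x = v) \<and>
      (\<forall>G\<in>faces B. G \<subseteq> max_abs_set g D \<and> (\<exists>v. \<forall>x\<in>G. g x = v) \<and> G \<noteq> F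
          \<longrightarrow> aff_dim G < aff_dim F))"

text \<open>Value on a set S (in the closure of D) of the continuous extension of h from D.\<close>
definition ext_value :: "('a::euclidean_space \<Rightarrow> real) \<Rightarrow> 'a set \<Rightarrow> 'a set \<Rightarrow> real" where
  "ext_value h D S = Lim (at (SOME x. x \<in> S) within D) h"

text \<open>c(g, D) where g is a branch of a power of the affine g0 on the bounded domain D of B.\<close>
definition c_const :: "'a::euclidean_space set set \<Rightarrow> ('a \<Rightarrow> real) \<Rightarrow> ('a \<Rightarrow> real) \<Rightarrow> 'a set \<Rightarrow> real" where
  "c_const B g0 h D = ext_value h D (ext_support B D g0)"

definition gt :: "('a::euclidean_space \<Rightarrow> real) \<Rightarrow> real \<Rightarrow> 'a \<Rightarrow> real" where
  "gt f0 t x = (ft f0 t x) powr t"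

end

theory Submission
  imports Defs
begin

definition hpa :: "'a::euclidean_space set \<Rightarrow> 'a" where
  "hpa H = fst (SOME ab. fst ab \<noteq> 0 \<and> H = {x. fst ab \<bullet> x = snd ab})"
definition hpb :: "'a::euclidean_space set \<Rightarrow> real" where
  "hpb H = snd (SOME ab. fst ab \<noteq> 0 \<and> H = {x. fst ab \<bullet> x = snd ab})"
definition lev :: "'a::euclidean_space set \<Rightarrow> 'a \<Rightarrow> real" where
  "lev H x = hpa H \<bullet> x - hpb H"

lemma hyp_eq:
  assumes "affine_hyperplane H"
  shows "H = {x. hpa H \<bullet> x = hpb H}"
proof -
  obtain a b where "a \<noteq> 0" "H = {x. a \<bullet> x = b}" using assms unfolding affine_hyperplane_def by blast
  then have "\<exists>ab. fst ab \<noteq> 0 \<and> H = {x. fst ab \<bullet> x = snd ab}" by (intro exI[of _ "(a,b)"]) auto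
  from someI_ex[OF this] show ?thesis unfolding hpa_def hpb_def by blast
qed

lemma mem_hyp: "affine_hyperplane H \<Longrightarrow> x \<in> H \<longleftrightarrow> lev H x = 0"
  using hyp_eq[of H] unfolding lev_def by auto

lemma cont_lev[continuous_intros]: "continuous_on S (lev H)"
  unfolding lev_def by (intro continuous_intros)

lemma lev_comb: "lev H ((1 - u) *\<^sub>R x + u *\<^sub>R y) = (1 - u) * lev H x + u * lev H y"
  unfolding lev_def by (simp add: inner_add_right algebra_simps)

lemma lev_lin: "lev H (x + u *\<^sub>R y) = lev H x + u * (hpa H \<bullet> y)"
  unfolding lev_def by (simp add: inner_add_right algebra_simps)

definition cellset :: "'a::euclidean_space set set \<Rightarrow> 'a \<Rightarrow> 'a set" where
  "cellset R p = (\<Inter>H\<in>R. {x. 0 < lev H x * lev H p})"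

lemma open_cellset: "finite R \<Longrightarrow> open (cellset R p)"
  unfolding cellset_def
  by (intro open_INT ballI open_Collect_less continuous_intros) auto

lemma convex_cellset: "convex (cellset R p)"
  unfolding cellset_def
proof (intro convex_INT ballI)
  fix H assume "H \<in> R"
  have "{x. 0 < lev H x * lev H p} = {x. (lev H p *\<^sub>R hpa H) \<bullet> x > hpb H * lev H p}"
    unfolding lev_def by (auto simp: algebra_simps)
  then show "convex {x. 0 < lev H x * lev H p}"
    using convex_halfspace_gt[of "hpb H * lev H p" "lev H p *\<^sub>R hpa H"] by simp
qed

lemma cell:
  assumes S: "convex S" and R: "finite R" "\<forall>H\<in>R. affine_hyperplane H"
    and C: "C \<in> components (S - \<Union>R)" and p: "p \<in> C"
  shows "C = S \<inter> cellset R p"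
proof
  have pS: "p \<in> S - \<Union>R" using C p in_components_subset by blast
  show "S \<inter> cellset R p \<subseteq> C"
  proof (rule components_maximal[OF C])
    show "connected (S \<inter> cellset R p)"
      by (intro convex_connected convex_Int S convex_cellset)
    show "S \<inter> cellset R p \<subseteq> S - \<Union> R"
      unfolding cellset_def using R(2) mem_hyp by fastforce
    have "\<forall>H\<in>R. lev H p \<noteq> 0" using pS R(2) mem_hyp by blast
    then have "p \<in> S \<inter> cellset R p" using pS unfolding cellset_def
      by (auto simp: zero_less_mult_iff)
    then show "C \<inter> (S \<inter> cellset R p) \<noteq> {}" using p by blast
  qed
  show "C \<subseteq> S \<inter> cellset R p"
  proof
    fix x assume x: "x \<in> C"
    have xS: "x \<in> S - \<Union>R" using C x in_components_subset by blast
    have conC: "connected C" using C in_components_connected by blast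
    have "0 < lev H x * lev H p" if H: "H \<in> R" for H
    proof (rule ccontr)
      assume n: "\<not> 0 < lev H x * lev H p"
      have nx: "lev H x \<noteq> 0" "lev H p \<noteq> 0" using xS pS H R(2) mem_hyp by blast+
      have CH: "C \<inter> H = {}" using C in_components_subset H by blast
      have "\<exists>z\<in>C. hpa H \<bullet> z = hpb H"
      proof (cases "lev H x \<le> 0")
        case True
        then have "hpa H \<bullet> x \<le> hpb H" "hpb H \<le> hpa H \<bullet> p"
          using n nx unfolding lev_def by (auto simp: zero_less_mult_iff not_less)
        then show ?thesis using connected_ivt_hyperplane[OF conC x p] by blast
      next
        case False
        then have "hpa H \<bullet> p \<le> hpb H" "hpb H \<le> hpa H \<bullet> x"
          using n nx unfolding lev_def by (auto simp: zero_less_mult_iff not_less)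
        then show ?thesis using connected_ivt_hyperplane[OF conC p x] by blast
      qed
      then show False using CH hyp_eq[of H] R(2) H by blast
    qed
    then show "x \<in> S \<inter> cellset R p" using xS unfolding cellset_def by blast
  qed
qed


lemma rl1: "0 \<le> a * c \<Longrightarrow> 0 \<le> b * c \<Longrightarrow> (c::real) \<noteq> 0 \<Longrightarrow> a + b = 0 \<Longrightarrow> a = 0"
  by (cases "c > 0") (auto simp: zero_le_mult_iff)

lemma rl2: "0 < a * b \<Longrightarrow> 0 \<le> b * c \<Longrightarrow> 0 \<le> a * (c::real)"
  by (auto simp: zero_le_mult_iff zero_less_mult_iff)

lemma rl3: "a \<noteq> 0 \<Longrightarrow> b \<noteq> 0 \<Longrightarrow> 0 \<le> a * c \<Longrightarrow> 0 \<le> b * c \<Longrightarrow> (c::real) \<noteq> 0 \<Longrightarrow> 0 < a * b"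
  by (auto simp: zero_le_mult_iff zero_less_mult_iff)

lemma dom_cell:
  assumes A: "arrangement A" and D: "D \<in> domains A" and p: "p \<in> D"
  shows "D = cellset A p"
  using cell[of UNIV A D p] A D p unfolding arrangement_def domains_def by auto

lemma dom_lev_nz:
  assumes A: "arrangement A" and D: "D \<in> domains A" and p: "p \<in> D" and H: "H \<in> A"
  shows "lev H p \<noteq> 0"
proof -
  have "p \<notin> H" using D p H in_components_subset unfolding domains_def by blast
  then show ?thesis using mem_hyp A H unfolding arrangement_def by blast
qed

lemma closure_dom:
  assumes A: "arrangement A" and D: "D \<in> domains A" and p: "p \<in> D"
  shows "closure D = {x. \<forall>H\<in>A. 0 \<le> lev H x * lev H p}"
proof
  have eq: "{x. \<forall>H\<in>A. 0 \<le> lev H x * lev H p} = (\<Inter>H\<in>A. {x. 0 \<le> lev H x * lev H p})" by auto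
  have "closed {x. \<forall>H\<in>A. 0 \<le> lev H x * lev H p}"
    unfolding eq by (intro closed_INT ballI closed_Collect_le continuous_intros)
  moreover have "D \<subseteq> {x. \<forall>H\<in>A. 0 \<le> lev H x * lev H p}"
    using dom_cell[OF A D p] unfolding cellset_def by (auto intro: less_imp_le)
  ultimately show "closure D \<subseteq> {x. \<forall>H\<in>A. 0 \<le> lev H x * lev H p}"
    by (rule closure_minimal[rotated])
  show "{x. \<forall>H\<in>A. 0 \<le> lev H x * lev H p} \<subseteq> closure D"
  proof
    fix x assume x: "x \<in> {x. \<forall>H\<in>A. 0 \<le> lev H x * lev H p}"
    show "x \<in> closure D"
    proof (cases "x = p")
      case True then show ?thesis using p closure_subset by blast
    next
      case False
      have "open_segment x p \<subseteq> D"
      proof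
        fix y assume "y \<in> open_segment x p"
        then obtain u where u: "0 < u" "u < 1" "y = (1 - u) *\<^sub>R x + u *\<^sub>R p"
          unfolding in_segment by blast
        have "0 < lev H y * lev H p" if H: "H \<in> A" for H
        proof -
          have "lev H y * lev H p = (1 - u) * (lev H x * lev H p) + u * (lev H p * lev H p)"
            unfolding u(3) lev_comb by (simp add: algebra_simps)
          moreover have "0 \<le> (1 - u) * (lev H x * lev H p)" using x H u by simp
          moreover have "0 < u * (lev H p * lev H p)" using dom_lev_nz[OF A D p H] u(1)
            by (metis mult_pos_pos not_real_square_gt_zero)
          ultimately show ?thesis by linarith
        qed
        then show "y \<in> D" using dom_cell[OF A D p] unfolding cellset_def by auto
      qed
      then have "closure (open_segment x p) \<subseteq> closure D" by (rule closure_mono)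
      then show ?thesis using False by auto
    qed
  qed
qed


lemma affine_hyp_set: "affine_hyperplane H \<Longrightarrow> affine H"
  using hyp_eq[of H] affine_hyperplane[of "hpa H" "hpb H"] by metis

lemma edge_affine:
  assumes A: "arrangement A" and B: "B \<subseteq> A"
  shows "affine (\<Inter>B)"
  using A B affine_hyp_set unfolding arrangement_def by (intro affine_Inter) blast

lemma face_props:
  assumes A: "arrangement A" and G: "G \<in> faces A"
  obtains F q where "F \<in> edges A" "affine F" "G \<in> components (F - \<Union>{H\<in>A. \<not> F \<subseteq> H})"
    "q \<in> G" "G = F \<inter> cellset {H\<in>A. \<not> F \<subseteq> H} q" "affine hull G = F" "aff_dim G = aff_dim F"
proof -
  obtain F where F: "F \<in> edges A" and GF: "G \<in> components (F - \<Union>{H\<in>A. \<not> F \<subseteq> H})"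
    using G unfolding faces_def by blast
  obtain B where B: "B \<subseteq> A" "F = \<Inter>B" using F unfolding edges_def by blast
  have aF: "affine F" using edge_affine[OF A B(1)] B(2) by simp
  obtain q where q: "q \<in> G" using GF in_components_nonempty by blast
  have fin: "finite {H\<in>A. \<not> F \<subseteq> H}" "\<forall>H\<in>{H\<in>A. \<not> F \<subseteq> H}. affine_hyperplane H"
    using A unfolding arrangement_def by auto
  have Gc: "G = F \<inter> cellset {H\<in>A. \<not> F \<subseteq> H} q"
    using cell[OF affine_imp_convex[OF aF] fin GF q] .
  have ne: "F \<inter> cellset {H\<in>A. \<not> F \<subseteq> H} q \<noteq> {}" using Gc q by blast
  have "affine hull G = affine hull F"
    unfolding Gc by (rule affine_hull_convex_Int_open[OF affine_imp_convex[OF aF] open_cellset[OF fin(1)] ne])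
  then have h: "affine hull G = F" using aF by simp
  then have "aff_dim G = aff_dim F" by (metis aff_dim_affine_hull)
  then show ?thesis using that F aF GF q Gc h by blast
qed

lemma min_set_eq:
  assumes "x1 \<in> min_set f0 D"
  shows "min_set f0 D = {x \<in> closure D. f0 x = f0 x1}"
  using assms unfolding min_set_def by (auto intro: order_antisym)

lemma KL:
  fixes A :: "'a::euclidean_space set set"
  assumes A: "arrangement A" and D: "\<Delta> \<in> domains A" and f: "f0 = (\<lambda>x. c \<bullet> x + d)"
    and x1: "x1 \<in> min_set f0 \<Delta>"
  shows "\<exists>G0\<in>faces A. G0 \<subseteq> min_set f0 \<Delta> \<and> (\<forall>G\<in>faces A. G \<subseteq> min_set f0 \<Delta> \<longrightarrow>
            aff_dim G \<le> aff_dim G0 \<and> (aff_dim G = aff_dim G0 \<longrightarrow> G = G0))"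
proof -
  have finA: "finite A" and hyp: "\<forall>H\<in>A. affine_hyperplane H" using A unfolding arrangement_def by auto
  obtain p where p: "p \<in> \<Delta>" using D in_components_nonempty unfolding domains_def by blast
  note clo = closure_dom[OF A D p]
  have lp: "\<And>H. H \<in> A \<Longrightarrow> lev H p \<noteq> 0" using dom_lev_nz[OF A D p] by blast
  define M where "M = min_set f0 \<Delta>"
  define m where "m = f0 x1"
  have Meq: "M = {x \<in> closure \<Delta>. f0 x = m}" unfolding M_def m_def by (rule min_set_eq[OF x1])
  have mmin: "\<And>y. y \<in> closure \<Delta> \<Longrightarrow> m \<le> f0 y" using x1 unfolding m_def min_set_def by blast
  define Z where "Z x = {H\<in>A. lev H x = 0}" for x
  have finZ: "finite (Z x)" for x unfolding Z_def using finA by simp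
  obtain z where zM: "z \<in> M" and zmin: "\<And>y. y \<in> M \<Longrightarrow> card (Z z) \<le> card (Z y)"
    using ex_has_least_nat[of "\<lambda>y. y \<in> M" x1 "\<lambda>y. card (Z y)"] x1 unfolding M_def by blast
  have convD: "convex (closure \<Delta>)"
    using dom_cell[OF A D p] convex_cellset convex_closure by metis
  have Zsub: "Z z \<subseteq> Z x" if xM: "x \<in> M" for x
  proof -
    define w where "w = (1 - 1/2) *\<^sub>R z + (1/2) *\<^sub>R x"
    have wD: "w \<in> closure \<Delta>" unfolding w_def
      using convexD_alt[OF convD, of z x "1/2"] zM xM Meq by auto
    have "f0 w = m" using zM xM Meq unfolding w_def f by (simp add: inner_add_right algebra_simps)
    then have wM: "w \<in> M" using wD Meq by blast
    have zD: "z \<in> closure \<Delta>" and xD: "x \<in> closure \<Delta>" using zM xM Meq by auto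
    have ZW: "Z w \<subseteq> Z z \<inter> Z x"
    proof
      fix H assume H: "H \<in> Z w"
      then have HA: "H \<in> A" and l0: "lev H w = 0" unfolding Z_def by auto
      have s: "lev H z + lev H x = 0" using l0 unfolding w_def lev_comb by simp
      have a: "0 \<le> lev H z * lev H p" "0 \<le> lev H x * lev H p" using zD xD clo HA by auto
      have "lev H z = 0" using rl1[OF a lp[OF HA] s] .
      moreover have "lev H x = 0" using rl1[OF a(2) a(1) lp[OF HA]] s by simp
      ultimately show "H \<in> Z z \<inter> Z x" using HA unfolding Z_def by auto
    qed
    have "Z w = Z z"
      using card_subset_eq[OF finZ[of z], of "Z w"] ZW zmin[OF wM]
      by (metis Int_subset_iff card_mono finZ le_antisym)
    then show ?thesis using ZW by blast
  qed
  define Z0 where "Z0 = Z z"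
  define F0 where "F0 = \<Inter>Z0"
  define R0 where "R0 = {H\<in>A. \<not> F0 \<subseteq> H}"
  have zD: "z \<in> closure \<Delta>" using zM Meq by auto
  have Z0A: "Z0 \<subseteq> A" unfolding Z0_def Z_def by auto
  have zF0: "z \<in> F0" unfolding F0_def Z0_def Z_def using mem_hyp hyp by blast
  have F0e: "F0 \<in> edges A" unfolding edges_def F0_def using Z0A zF0 F0_def by blast
  have aF0: "affine F0" unfolding F0_def by (rule edge_affine[OF A Z0A])
  have R0eq: "R0 = A - Z0"
  proof
    show "R0 \<subseteq> A - Z0" unfolding R0_def F0_def by auto
    show "A - Z0 \<subseteq> R0"
    proof
      fix H assume H: "H \<in> A - Z0"
      then have "z \<notin> H" using mem_hyp hyp unfolding Z0_def Z_def by auto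
      then show "H \<in> R0" using H zF0 unfolding R0_def by auto
    qed
  qed
  have zR: "z \<in> F0 - \<Union>R0"
    using zF0 R0eq mem_hyp hyp unfolding Z0_def Z_def by auto
  define G0 where "G0 = connected_component_set (F0 - \<Union>R0) z"
  have G0c: "G0 \<in> components (F0 - \<Union>R0)" unfolding G0_def using zR by (rule componentsI)
  have zG0: "z \<in> G0" unfolding G0_def using zR by simp
  have G0f: "G0 \<in> faces A" unfolding faces_def using F0e G0c R0_def by blast
  have finR0: "finite R0" "\<forall>H\<in>R0. affine_hyperplane H" using finA hyp unfolding R0_def by auto
  have G0cell: "G0 = F0 \<inter> cellset R0 z"
    using cell[OF affine_imp_convex[OF aF0] finR0 G0c zG0] .
  have G0D: "G0 \<subseteq> closure \<Delta>"
  proof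
    fix y assume y: "y \<in> G0"
    have "0 \<le> lev H y * lev H p" if H: "H \<in> A" for H
    proof (cases "H \<in> Z0")
      case True
      then have "y \<in> H" using y G0cell unfolding F0_def by auto
      then have "lev H y = 0" using mem_hyp hyp H by blast
      then show ?thesis by simp
    next
      case False
      then have "H \<in> R0" using R0eq H by blast
      then have "0 < lev H y * lev H z" using y G0cell unfolding cellset_def by auto
      moreover have "0 \<le> lev H z * lev H p" using zD clo H by auto
      ultimately show ?thesis by (rule rl2)
    qed
    then show "y \<in> closure \<Delta>" using clo by auto
  qed
  have G0m: "f0 y = m" if y: "y \<in> G0" for y
  proof -
    have zc: "z \<in> cellset R0 z" using zG0 G0cell by blast
    obtain e where e: "e > 0" "ball z e \<subseteq> cellset R0 z"
      using open_cellset[OF finR0(1)] zc open_contains_ball by blast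
    define s where "s = e / (2 * (norm (y - z) + 1))"
    have s0: "s > 0" unfolding s_def using e(1)
      by (intro divide_pos_pos) (auto intro: add_nonneg_pos)
    define w where "w = (1 + s) *\<^sub>R z + (- s) *\<^sub>R y"
    have "w \<in> F0" unfolding w_def
      using mem_affine[OF aF0 zF0, of y "1 + s" "-s"] y G0cell by auto
    moreover have "dist z w < e"
    proof -
      have "z - w = s *\<^sub>R (y - z)" unfolding w_def by (simp add: algebra_simps)
      then have "dist z w = s * norm (y - z)" unfolding dist_norm using s0 by simp
      also have "\<dots> < e"
      proof -
        have d: "0 < 2 * (norm (y - z) + 1)" by (simp add: add_nonneg_pos)
        have q: "norm (y - z) / (2 * (norm (y - z) + 1)) < 1" using d by (simp add: divide_less_eq)
        have "s * norm (y - z) = e * (norm (y - z) / (2 * (norm (y - z) + 1)))" unfolding s_def by simp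
        also have "\<dots> < e * 1" by (rule mult_strict_left_mono[OF q e(1)])
        finally show ?thesis by simp
      qed
      finally show ?thesis .
    qed
    ultimately have "w \<in> G0" using e G0cell by auto
    then have "m \<le> f0 w" using G0D mmin by blast
    moreover have "f0 w = (1 + s) * f0 z - s * f0 y" unfolding w_def f
      by (simp add: inner_add_right algebra_simps)
    moreover have "f0 z = m" using zM Meq by auto
    moreover have "m \<le> f0 y" using y G0D mmin by blast
    ultimately have "m \<le> m + s * m - s * f0 y" by (simp add: distrib_right)
    then have "s * f0 y \<le> s * m" by linarith
    then have "f0 y \<le> m" using s0 by simp
    then show ?thesis using \<open>m \<le> f0 y\<close> by linarith
  qed
  have G0M: "G0 \<subseteq> M" using G0D G0m Meq by blast
  have dG0: "aff_dim G0 = aff_dim F0"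
    unfolding G0cell
    by (rule aff_dim_convex_Int_open[OF affine_imp_convex[OF aF0] open_cellset[OF finR0(1)]])
       (use zG0 G0cell in blast)
  have main: "aff_dim G \<le> aff_dim G0 \<and> (aff_dim G = aff_dim G0 \<longrightarrow> G = G0)"
    if G: "G \<in> faces A" "G \<subseteq> M" for G
  proof -
    obtain F q where F: "F \<in> edges A" "affine F" "G \<in> components (F - \<Union>{H\<in>A. \<not> F \<subseteq> H})"
      "q \<in> G" "G = F \<inter> cellset {H\<in>A. \<not> F \<subseteq> H} q" "affine hull G = F" "aff_dim G = aff_dim F"
      by (rule face_props[OF A G(1)])
    have GF0: "G \<subseteq> F0"
    proof
      fix x assume x: "x \<in> G"
      then have "Z0 \<subseteq> Z x" using Zsub G(2) unfolding Z0_def by blast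
      have "x \<in> H" if H: "H \<in> Z0" for H
      proof -
        have "H \<in> A" "lev H x = 0" using H \<open>Z0 \<subseteq> Z x\<close> unfolding Z_def by auto
        then show ?thesis using mem_hyp hyp by blast
      qed
      then show "x \<in> F0" unfolding F0_def by blast
    qed
    have FF0: "F \<subseteq> F0" using F(6) hull_minimal[of G F0 affine, OF GF0 aF0] by simp
    have le: "aff_dim F \<le> aff_dim F0" by (rule aff_dim_subset[OF FF0])
    have eq: "G = G0" if e: "aff_dim G = aff_dim G0"
    proof -
      have GsF: "G \<subseteq> F" using F(6) hull_subset[of G affine] by simp
      have Fne: "F \<noteq> {}" using GsF F(4) by blast
      have dd: "aff_dim F = aff_dim F0" using F(7) e dG0 by simp
      have "F = F0" by (rule affine_dim_equal[OF F(2) aF0 Fne FF0 dd])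
      then have Gc: "G \<in> components (F0 - \<Union>R0)" using F(3) unfolding R0_def by simp
      have qR: "q \<in> F0 - \<Union>R0" using Gc F(4) in_components_subset by blast
      have qD: "q \<in> closure \<Delta>" using F(4) G(2) Meq by auto
      have "0 < lev H q * lev H z" if H: "H \<in> R0" for H
      proof (rule rl3)
        show "lev H q \<noteq> 0" using qR H mem_hyp finR0(2) by blast
        show "lev H z \<noteq> 0" using zR H mem_hyp finR0(2) by blast
        show "0 \<le> lev H q * lev H p" "0 \<le> lev H z * lev H p" using qD zD clo H R0eq by auto
        show "lev H p \<noteq> 0" using lp H R0eq by blast
      qed
      then have "q \<in> G0" using G0cell qR unfolding cellset_def by auto
      then show "G = G0" using components_nonoverlap[OF Gc G0c] F(4) by blast
    qed
    show ?thesis using le F(7) dG0 eq by simp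
  qed
  show ?thesis using G0f G0M main unfolding M_def by blast
qed


lemma Ht_eq: "t \<noteq> 0 \<Longrightarrow> Ht f0 t = {x. f0 x = t}"
  unfolding Ht_def ft_def by (auto simp: field_simps)

lemma f0_comb: "f0 = (\<lambda>x. c \<bullet> x + d) \<Longrightarrow> f0 ((1 - u) *\<^sub>R x + u *\<^sub>R y) = (1 - u) * f0 x + u * f0 y"
  by (simp add: inner_add_right algebra_simps)

lemma FT:
  assumes A: "arrangement A" and t: "t > 0" "m < t" and Gm: "G \<subseteq> {x. f0 x = m}" and Gne: "G \<noteq> {}"
    and f: "f0 = (\<lambda>x. c \<bullet> x + d)"
  shows "G \<in> faces (At A f0 t) \<longleftrightarrow> G \<in> faces A"
proof -
  have Htq: "Ht f0 t = {x. f0 x = t}" using Ht_eq[of t f0] t by simp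
  have GH: "G \<inter> Ht f0 t = {}" using Gm t Htq by auto
  have Rs: "{H \<in> At A f0 t. \<not> F \<subseteq> H} = insert (Ht f0 t) {H\<in>A. \<not> F \<subseteq> H}"
    if "\<not> F \<subseteq> Ht f0 t" for F
    using that unfolding At_def by auto
  have Fd: "F - \<Union>(insert (Ht f0 t) R) = (F - \<Union>R) - Ht f0 t" for F R by auto
  show ?thesis
  proof
    assume G: "G \<in> faces A"
    then obtain F where F: "F \<in> edges A" and GF: "G \<in> components (F - \<Union>{H\<in>A. \<not> F \<subseteq> H})"
      unfolding faces_def by blast
    have GsF: "G \<subseteq> F - \<Union>{H\<in>A. \<not> F \<subseteq> H}" using GF in_components_subset by blast
    have nF: "\<not> F \<subseteq> Ht f0 t" using GsF GH Gne by blast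
    have Fe: "F \<in> edges (At A f0 t)" using F unfolding edges_def At_def by blast
    have "G \<in> components ((F - \<Union>{H\<in>A. \<not> F \<subseteq> H}) - Ht f0 t)"
      by (rule components_intermediate_subset[OF GF]) (use GsF GH in auto)
    then have "G \<in> components (F - \<Union>{H \<in> At A f0 t. \<not> F \<subseteq> H})"
      unfolding Rs[OF nF] Fd .
    then show "G \<in> faces (At A f0 t)" unfolding faces_def using Fe by blast
  next
    assume G: "G \<in> faces (At A f0 t)"
    then obtain F where F: "F \<in> edges (At A f0 t)" and GF: "G \<in> components (F - \<Union>{H\<in>At A f0 t. \<not> F \<subseteq> H})"
      unfolding faces_def by blast
    have GsF: "G \<subseteq> F" using GF in_components_subset by blast
    have nF: "\<not> F \<subseteq> Ht f0 t" using GsF GH Gne by blast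
    obtain B where B: "B \<subseteq> At A f0 t" "F = \<Inter>B" "\<Inter>B \<noteq> {}" using F unfolding edges_def by blast
    have "Ht f0 t \<notin> B" using B nF by blast
    then have BA: "B \<subseteq> A" using B(1) unfolding At_def by blast
    have FeA: "F \<in> edges A" using BA B unfolding edges_def by blast
    define R where "R = {H\<in>A. \<not> F \<subseteq> H}"
    have GF': "G \<in> components ((F - \<Union>R) - Ht f0 t)"
      using GF unfolding Rs[OF nF] Fd R_def .
    obtain q where q: "q \<in> G" using Gne by blast
    have qS: "q \<in> F - \<Union>R" using GF' q in_components_subset by blast
    define C where "C = connected_component_set (F - \<Union>R) q"
    have Cc: "C \<in> components (F - \<Union>R)" unfolding C_def using qS by (rule componentsI)
    have qC: "q \<in> C" unfolding C_def using qS by simp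
    have aF: "affine F" using edge_affine[OF A BA] B(2) by simp
    have finR: "finite R" "\<forall>H\<in>R. affine_hyperplane H" using A unfolding arrangement_def R_def by auto
    have Ccell: "C = F \<inter> cellset R q" using cell[OF affine_imp_convex[OF aF] finR Cc qC] .
    have convC: "convex C" unfolding Ccell by (intro convex_Int affine_imp_convex aF convex_cellset)
    have GC: "G \<subseteq> C" unfolding C_def
      by (rule connected_component_maximal[OF q in_components_connected[OF GF']])
         (use GF' in_components_subset in blast)
    have C'G: "C \<inter> {x. f0 x < t} \<subseteq> G"
    proof (rule components_maximal[OF GF'])
      have "{x. f0 x < t} = {x. c \<bullet> x < t - d}" using f by auto
      then have "convex {x. f0 x < t}" by (simp add: convex_halfspace_lt)
      then show "connected (C \<inter> {x. f0 x < t})" by (intro convex_connected convex_Int convC)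
      show "C \<inter> {x. f0 x < t} \<subseteq> F - \<Union> R - Ht f0 t"
        using Cc in_components_subset Htq by fastforce
      have "f0 q < t" using q Gm t by auto
      then show "G \<inter> (C \<inter> {x. f0 x < t}) \<noteq> {}" using q qC by blast
    qed
    have CG: "C \<subseteq> G"
    proof
      fix x assume x: "x \<in> C"
      have fq: "f0 q = m" using q Gm by auto
      have "f0 x < t"
      proof (rule ccontr)
        assume "\<not> f0 x < t"
        then have fx: "t \<le> f0 x" by simp
        define u where "u = (t - m) / (2 * (f0 x - m))"
        have pos: "0 < f0 x - m" using fx t by simp
        have u0: "0 < u" unfolding u_def using pos t by simp
        have u1: "u \<le> 1" unfolding u_def using pos fx by (simp add: divide_le_eq)
        define w where "w = (1 - u) *\<^sub>R q + u *\<^sub>R x"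
        have "w \<in> C" unfolding w_def using convexD_alt[OF convC qC x] u0 u1 by simp
        moreover have fw: "f0 w = m + u * (f0 x - m)" unfolding w_def f0_comb[OF f] fq
          by (simp add: algebra_simps)
        moreover have "u * (f0 x - m) = (t - m) / 2" unfolding u_def using pos by (simp add: field_simps)
        ultimately have fw2: "w \<in> C" "f0 w = m + (t - m) / 2" by auto
        then have "f0 w < t" using t by (simp add: field_simps)
        then have "w \<in> G" using fw2 C'G by blast
        then have "f0 w = m" using Gm by auto
        then show False using fw2 t by (simp add: field_simps)
      qed
      then show "x \<in> G" using C'G x by blast
    qed
    have "G = C" using GC CG by blast
    then show "G \<in> faces A" unfolding faces_def using FeA Cc R_def by blast
  qed
qed

lemma ME:
  assumes D: "\<Delta> \<in> bdd_or_growing A f0" and f: "f0 = (\<lambda>x. c \<bullet> x + d)"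
  shows "\<exists>x1. x1 \<in> min_set f0 \<Delta>"
proof -
  have Dd: "\<Delta> \<in> domains A" using D unfolding bdd_or_growing_def by auto
  obtain p where p: "p \<in> \<Delta>" using Dd in_components_nonempty unfolding domains_def by blast
  have cont: "continuous_on S f0" for S unfolding f by (intro continuous_intros)
  show ?thesis
  proof (cases "bounded \<Delta>")
    case True
    have "\<exists>x\<in>closure \<Delta>. \<forall>y\<in>closure \<Delta>. f0 x \<le> f0 y"
      by (rule continuous_attains_inf) (use True p closure_subset cont in auto)
    then show ?thesis unfolding min_set_def by blast
  next
    case False
    then have g: "growing A f0 \<Delta>" using D unfolding bdd_or_growing_def by auto
    obtain R where R: "\<forall>x\<in>\<Delta>. norm x \<ge> R \<longrightarrow> f0 x \<ge> f0 p + 1"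
      using g unfolding growing_def by blast
    have Seq: "{x. R < norm x \<longrightarrow> f0 p + 1 \<le> f0 x} = {x. norm x \<le> R} \<union> {x. f0 p + 1 \<le> f0 x}"
      by auto
    have cS: "closed {x. R < norm x \<longrightarrow> f0 p + 1 \<le> f0 x}"
      unfolding Seq by (intro closed_Un closed_Collect_le continuous_intros cont)
    have "\<Delta> \<subseteq> {x. R < norm x \<longrightarrow> f0 p + 1 \<le> f0 x}" using R by auto
    then have cl: "closure \<Delta> \<subseteq> {x. R < norm x \<longrightarrow> f0 p + 1 \<le> f0 x}"
      using closure_minimal cS by blast
    have pR: "norm p \<le> R" using R p by force
    define K where "K = closure \<Delta> \<inter> cball 0 R"
    have "compact K" unfolding K_def by (intro closed_Int_compact) auto
    moreover have pK: "p \<in> K" unfolding K_def using p pR closure_subset by auto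
    ultimately obtain x where x: "x \<in> K" "\<forall>y\<in>K. f0 x \<le> f0 y"
      using continuous_attains_inf[of K f0] cont by blast
    have "\<forall>y\<in>closure \<Delta>. f0 x \<le> f0 y"
    proof
      fix y assume y: "y \<in> closure \<Delta>"
      show "f0 x \<le> f0 y"
      proof (cases "norm y \<le> R")
        case True then show ?thesis using x y unfolding K_def by auto
      next
        case False
        then have "f0 p + 1 \<le> f0 y" using cl y by auto
        moreover have "f0 x \<le> f0 p" using x pK by auto
        ultimately show ?thesis by simp
      qed
    qed
    then show ?thesis using x unfolding min_set_def K_def by blast
  qed
qed


lemma empty_not_face: "{} \<notin> faces B"
  unfolding faces_def using in_components_nonempty by blast

lemma ftpos: "t > 0 \<Longrightarrow> ft f0 t x > 0 \<longleftrightarrow> f0 x < t"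
  unfolding ft_def by (simp add: field_simps)

lemma MX:
  assumes t: "t > 0" and pos: "\<forall>x\<in>D. ft f0 t x > 0" and f: "f0 = (\<lambda>x. c \<bullet> x + d)"
  shows "max_abs_set (ft f0 t) D = min_set f0 D"
proof -
  have cl: "closed {x. 0 \<le> ft f0 t x}" unfolding ft_def f
    by (intro closed_Collect_le continuous_intros) (use t in auto)
  have "D \<subseteq> {x. 0 \<le> ft f0 t x}" using pos by (auto intro: less_imp_le)
  then have nn: "closure D \<subseteq> {x. 0 \<le> ft f0 t x}" using closure_minimal cl by blast
  have eq: "\<bar>ft f0 t y\<bar> \<le> \<bar>ft f0 t x\<bar> \<longleftrightarrow> f0 x \<le> f0 y" if "x \<in> closure D" "y \<in> closure D" for x y
  proof -
    have "\<bar>ft f0 t y\<bar> = ft f0 t y" "\<bar>ft f0 t x\<bar> = ft f0 t x" using nn that by auto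
    moreover have "ft f0 t y \<le> ft f0 t x \<longleftrightarrow> f0 x / t \<le> f0 y / t" unfolding ft_def by linarith
    moreover have "f0 x / t \<le> f0 y / t \<longleftrightarrow> f0 x \<le> f0 y" using t by (simp add: divide_le_cancel)
    ultimately show ?thesis by simp
  qed
  show ?thesis unfolding max_abs_set_def min_set_def using eq by blast
qed

lemma MA:
  assumes D: "\<Delta> \<in> bdd_or_growing A f0" and f: "f0 = (\<lambda>x. c \<bullet> x + d)"
    and x1: "x1 \<in> min_set f0 \<Delta>" and mt: "f0 x1 < t"
  shows "min_set f0 (corr f0 t \<Delta>) = min_set f0 \<Delta>"
proof (cases "bounded \<Delta>")
  case True then show ?thesis unfolding corr_def by simp
next
  case False
  define U where "U = {x. f0 x < t}"
  have oU: "open U" unfolding U_def f by (intro open_Collect_less continuous_intros)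
  have c: "corr f0 t \<Delta> = \<Delta> \<inter> U" using False unfolding corr_def U_def by simp
  have sub: "closure (\<Delta> \<inter> U) \<subseteq> closure \<Delta>" by (intro closure_mono) auto
  have sub2: "U \<inter> closure \<Delta> \<subseteq> closure (\<Delta> \<inter> U)"
    using open_Int_closure_subset[OF oU, of \<Delta>] by (simp add: Int_commute)
  have x1c: "x1 \<in> closure \<Delta>" and mmin: "\<forall>y\<in>closure \<Delta>. f0 x1 \<le> f0 y" using x1 unfolding min_set_def by auto
  have x1U: "x1 \<in> closure (\<Delta> \<inter> U)" using sub2 x1c mt unfolding U_def by blast
  have "min_set f0 (\<Delta> \<inter> U) = min_set f0 \<Delta>"
  proof
    show "min_set f0 (\<Delta> \<inter> U) \<subseteq> min_set f0 \<Delta>"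
    proof
      fix x assume x: "x \<in> min_set f0 (\<Delta> \<inter> U)"
      then have "f0 x \<le> f0 x1" "x \<in> closure \<Delta>" using x1U sub unfolding min_set_def by auto
      then show "x \<in> min_set f0 \<Delta>" using mmin unfolding min_set_def by force
    qed
    show "min_set f0 \<Delta> \<subseteq> min_set f0 (\<Delta> \<inter> U)"
    proof
      fix x assume x: "x \<in> min_set f0 \<Delta>"
      then have xc: "x \<in> closure \<Delta>" and le: "f0 x \<le> f0 x1" using x1c unfolding min_set_def by auto
      then have "x \<in> U" using mt unfolding U_def by simp
      then have "x \<in> closure (\<Delta> \<inter> U)" using sub2 xc by blast
      then show "x \<in> min_set f0 (\<Delta> \<inter> U)" using x sub unfolding min_set_def by blast
    qed
  qed
  then show ?thesis using c by simp
qed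

theorem lemma6:
  fixes A :: "'a::euclidean_space set set" and f0 :: "'a \<Rightarrow> real" and \<Delta> :: "'a set"
  assumes "arrangement A" and "essential A" and "affine_nonconst f0"
    and "\<Delta> \<in> bdd_or_growing A f0"
  shows "(\<forall>t. large_enough A f0 t \<and> (\<forall>x\<in>corr f0 t \<Delta>. ft f0 t x > 0) \<longrightarrow>
            ext_support (At A f0 t) (corr f0 t \<Delta>) (ft f0 t) \<in> faces A)
       \<and> (\<forall>\<^sub>F t in at_top. ext_support (At A f0 t) (corr f0 t \<Delta>) (ft f0 t) = support_face A f0 \<Delta>)
       \<and> ((\<lambda>t. c_const (At A f0 t) (ft f0 t) (gt f0 t) (corr f0 t \<Delta>))
            \<longlongrightarrow> exp (- f0 (SOME x. x \<in> support_face A f0 \<Delta>))) at_top"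
proof -
  note A = assms(1)
  note DD = assms(4)
  obtain c d where c0: "c \<noteq> 0" and f: "f0 = (\<lambda>x. c \<bullet> x + d)"
    using assms(3) unfolding affine_nonconst_def by blast
  have Dd: "\<Delta> \<in> domains A" using DD unfolding bdd_or_growing_def by auto
  obtain x1 where x1: "x1 \<in> min_set f0 \<Delta>" using ME[OF DD f] by blast
  define M where "M = min_set f0 \<Delta>"
  define m where "m = f0 x1"
  have Meq: "M = {x \<in> closure \<Delta>. f0 x = m}" unfolding M_def m_def by (rule min_set_eq[OF x1])
  have mmin: "\<And>y. y \<in> closure \<Delta> \<Longrightarrow> m \<le> f0 y" using x1 unfolding m_def min_set_def by blast
  obtain G0 where G0f: "G0 \<in> faces A" and G0M: "G0 \<subseteq> M"
    and G0max: "\<And>G. G \<in> faces A \<Longrightarrow> G \<subseteq> M \<Longrightarrow> aff_dim G \<le> aff_dim G0 \<and> (aff_dim G = aff_dim G0 \<longrightarrow> G = G0)"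
    using KL[OF A Dd f x1] unfolding M_def by blast
  have SF: "support_face A f0 \<Delta> = G0"
    unfolding support_face_def M_def[symmetric]
  proof (rule the_equality)
    show "G0 \<in> faces A \<and> G0 \<subseteq> M \<and> (\<forall>G\<in>faces A. G \<subseteq> M \<and> G \<noteq> G0 \<longrightarrow> aff_dim G < aff_dim G0)"
    proof -
      have c: "\<forall>G\<in>faces A. G \<subseteq> M \<and> G \<noteq> G0 \<longrightarrow> aff_dim G < aff_dim G0"
      proof (intro ballI impI)
        fix G assume G: "G \<in> faces A" "G \<subseteq> M \<and> G \<noteq> G0"
        then have "aff_dim G \<le> aff_dim G0 \<and> (aff_dim G = aff_dim G0 \<longrightarrow> G = G0)" using G0max by blast
        then show "aff_dim G < aff_dim G0" using G by linarith
      qed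
      show ?thesis using c G0f G0M by blast
    qed
    fix F assume F: "F \<in> faces A \<and> F \<subseteq> M \<and> (\<forall>G\<in>faces A. G \<subseteq> M \<and> G \<noteq> F \<longrightarrow> aff_dim G < aff_dim F)"
    show "F = G0"
    proof (rule ccontr)
      assume "F \<noteq> G0"
      then have "aff_dim G0 < aff_dim F" using F G0f G0M by auto
      moreover have "aff_dim F \<le> aff_dim G0" using G0max F by blast
      ultimately show False by simp
    qed
  qed
  have ES: "ext_support (At A f0 t) D (ft f0 t) = G0"
    if t: "t > 0" "m < t" and mx: "max_abs_set (ft f0 t) D = M" for t D
  proof -
    have FF: "G \<in> faces (At A f0 t) \<longleftrightarrow> G \<in> faces A" if G: "G \<subseteq> M" for G
    proof (cases "G = {}")
      case True then show ?thesis using empty_not_face[of "At A f0 t"] empty_not_face[of A] by simp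
    next
      case False
      show ?thesis by (rule FT[OF A t _ False f]) (use G Meq in auto)
    qed
    have cst: "\<exists>v. \<forall>x\<in>G. ft f0 t x = v" if G: "G \<subseteq> M" for G
      using G Meq unfolding ft_def by (intro exI[of _ "1 - m / t"]) auto
    show ?thesis unfolding ext_support_def mx
    proof (rule the_equality)
      show "G0 \<in> faces (At A f0 t) \<and> G0 \<subseteq> M \<and> (\<exists>v. \<forall>x\<in>G0. ft f0 t x = v) \<and>
        (\<forall>G\<in>faces (At A f0 t). G \<subseteq> M \<and> (\<exists>v. \<forall>x\<in>G. ft f0 t x = v) \<and> G \<noteq> G0 \<longrightarrow> aff_dim G < aff_dim G0)"
      proof -
        have a: "G0 \<in> faces (At A f0 t)" using FF[OF G0M] G0f by simp
        have b: "\<exists>v. \<forall>x\<in>G0. ft f0 t x = v" using cst[OF G0M] .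
        have c: "\<forall>G\<in>faces (At A f0 t). G \<subseteq> M \<and> (\<exists>v. \<forall>x\<in>G. ft f0 t x = v) \<and> G \<noteq> G0 \<longrightarrow> aff_dim G < aff_dim G0"
        proof (intro ballI impI)
          fix G assume G: "G \<in> faces (At A f0 t)" "G \<subseteq> M \<and> (\<exists>v. \<forall>x\<in>G. ft f0 t x = v) \<and> G \<noteq> G0"
          then have "G \<in> faces A" using FF by blast
          then have "aff_dim G \<le> aff_dim G0 \<and> (aff_dim G = aff_dim G0 \<longrightarrow> G = G0)" using G0max G by blast
          then show "aff_dim G < aff_dim G0" using G by linarith
        qed
        show ?thesis using a b c G0M by blast
      qed
      fix F assume F: "F \<in> faces (At A f0 t) \<and> F \<subseteq> M \<and> (\<exists>v. \<forall>x\<in>F. ft f0 t x = v) \<and>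
        (\<forall>G\<in>faces (At A f0 t). G \<subseteq> M \<and> (\<exists>v. \<forall>x\<in>G. ft f0 t x = v) \<and> G \<noteq> F \<longrightarrow> aff_dim G < aff_dim F)"
      show "F = G0"
      proof (rule ccontr)
        assume "F \<noteq> G0"
        moreover have "G0 \<in> faces (At A f0 t)" using FF[OF G0M] G0f by simp
        moreover have "\<exists>v. \<forall>x\<in>G0. ft f0 t x = v" using cst[OF G0M] .
        ultimately have "aff_dim G0 < aff_dim F" using F G0M by blast
        moreover have "F \<in> faces A" using F FF by blast
        then have "aff_dim F \<le> aff_dim G0" using G0max F by blast
        ultimately show False by simp
      qed
    qed
  qed
  have corrsub: "corr f0 t \<Delta> \<subseteq> \<Delta>" for t unfolding corr_def by auto
  have P1: "ext_support (At A f0 t) (corr f0 t \<Delta>) (ft f0 t) \<in> faces A"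
    if le: "large_enough A f0 t" and pos: "\<forall>x\<in>corr f0 t \<Delta>. ft f0 t x > 0" for t
  proof -
    have t: "t > 0" and bij: "bij_betw (corr f0 t) (bdd_or_growing A f0) (bounded_domains (At A f0 t))"
      using le unfolding large_enough_def by auto
    have "corr f0 t \<Delta> \<in> bounded_domains (At A f0 t)" using bij_betw_apply[OF bij DD] .
    then obtain y where y: "y \<in> corr f0 t \<Delta>"
      unfolding bounded_domains_def domains_def using in_components_nonempty by blast
    have "f0 y < t" using pos y ftpos[OF t] by blast
    moreover have "m \<le> f0 y" using mmin y corrsub closure_subset by blast
    ultimately have mt: "m < t" by simp
    have "max_abs_set (ft f0 t) (corr f0 t \<Delta>) = M"
      using MX[OF t pos f] MA[OF DD f x1] mt unfolding M_def m_def by simp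
    then show ?thesis using ES[OF t mt] G0f by simp
  qed
  obtain K where K: "bounded \<Delta> \<Longrightarrow> \<forall>x\<in>\<Delta>. f0 x \<le> K"
  proof (cases "bounded \<Delta>")
    case True
    then obtain B where B: "\<forall>x\<in>\<Delta>. norm x \<le> B" unfolding Elementary_Metric_Spaces.bounded_iff by blast
    have "f0 x \<le> norm c * B + d" if x: "x \<in> \<Delta>" for x
    proof -
      have "c \<bullet> x \<le> norm c * norm x" by (rule norm_cauchy_schwarz)
      also have "\<dots> \<le> norm c * B" using B x by (simp add: mult_left_mono)
      finally show ?thesis unfolding f by simp
    qed
    then show ?thesis using that by blast
  next
    case False then show ?thesis using that by blast
  qed
  define T where "T = max 0 (max m K)"
  have good: "ext_support (At A f0 t) (corr f0 t \<Delta>) (ft f0 t) = G0 \<and>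
      max_abs_set (ft f0 t) (corr f0 t \<Delta>) = M" if tT: "T < t" for t
  proof -
    have t: "t > 0" "m < t" using tT unfolding T_def by auto
    have pos: "\<forall>x\<in>corr f0 t \<Delta>. ft f0 t x > 0"
    proof
      fix x assume x: "x \<in> corr f0 t \<Delta>"
      have "f0 x < t"
      proof (cases "bounded \<Delta>")
        case True
        then have "f0 x \<le> K" using K x unfolding corr_def by auto
        then show ?thesis using tT unfolding T_def by simp
      next
        case False then show ?thesis using x unfolding corr_def by simp
      qed
      then show "ft f0 t x > 0" using ftpos[OF t(1)] by blast
    qed
    have mx: "max_abs_set (ft f0 t) (corr f0 t \<Delta>) = M"
      using MX[OF t(1) pos f] MA[OF DD f x1] t(2) unfolding M_def m_def by simp
    show ?thesis using ES[OF t mx] mx by simp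
  qed
  have P2: "\<forall>\<^sub>F t in at_top. ext_support (At A f0 t) (corr f0 t \<Delta>) (ft f0 t) = support_face A f0 \<Delta>"
    using eventually_gt_at_top[of T] by eventually_elim (use good SF in simp)
  define x0 where "x0 = (SOME x. x \<in> G0)"
  have x0G: "x0 \<in> G0" unfolding x0_def using G0f empty_not_face some_in_eq by blast
  have fx0: "f0 x0 = m" using x0G G0M Meq by auto
  have openD: "open \<Delta>" using dom_cell[OF A Dd] open_cellset A unfolding arrangement_def
    by (metis Dd in_components_nonempty domains_def ex_in_conv)
  have val: "c_const (At A f0 t) (ft f0 t) (gt f0 t) (corr f0 t \<Delta>) = (1 + (- m) / t) powr t"
    if tT: "T < t" for t
  proof -
    define D where "D = corr f0 t \<Delta>"
    have t: "t > 0" "m < t" using tT unfolding T_def by auto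
    have g: "ext_support (At A f0 t) D (ft f0 t) = G0" "max_abs_set (ft f0 t) D = M"
      using good[OF tT] unfolding D_def by auto
    have mD: "min_set f0 D = M" using MA[OF DD f x1] t(2) unfolding D_def M_def m_def by simp
    have x0c: "x0 \<in> closure D" and x0min: "\<forall>y\<in>closure D. f0 x0 \<le> f0 y"
      using x0G G0M mD unfolding min_set_def by auto
    have oD: "open D"
    proof (cases "bounded \<Delta>")
      case True then show ?thesis using openD unfolding D_def corr_def by simp
    next
      case False
      have "open {x. f0 x < t}" unfolding f by (intro open_Collect_less continuous_intros)
      then show ?thesis using openD False unfolding D_def corr_def by auto
    qed
    have x0nD: "x0 \<notin> D"
    proof
      assume "x0 \<in> D"
      then obtain e where e: "e > 0" "ball x0 e \<subseteq> D" using oD open_contains_ball by blast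
      define s where "s = e / (2 * norm c)"
      have s0: "s > 0" unfolding s_def using e c0 by simp
      define y where "y = x0 - s *\<^sub>R c"
      have "dist x0 y = e / 2" unfolding y_def dist_norm s_def using c0 e by simp
      then have "y \<in> D" using e by auto
      then have "f0 x0 \<le> f0 y" using x0min closure_subset by blast
      moreover have "f0 y = f0 x0 - s * (c \<bullet> c)" unfolding y_def f by (simp add: inner_diff_right)
      moreover have "c \<bullet> c > 0" using c0 by simp
      then have "0 < s * (c \<bullet> c)" using s0 by (intro mult_pos_pos)
      ultimately show False by linarith
    qed
    have lim: "x0 islimpt D" using x0c x0nD unfolding closure_def by blast
    have nt: "\<not> trivial_limit (at x0 within D)" using lim trivial_limit_within by blast
    have tl: "((\<lambda>x. 1 - f0 x / t) \<longlongrightarrow> 1 - f0 x0 / t) (at x0 within D)"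
      unfolding f by (intro tendsto_intros) (use t in auto)
    have ne: "1 - f0 x0 / t \<noteq> 0" using fx0 t by (simp add: field_simps)
    have "(gt f0 t \<longlongrightarrow> (1 - f0 x0 / t) powr t) (at x0 within D)"
      unfolding gt_def ft_def by (rule tendsto_powr[OF tl tendsto_const ne])
    then have "Lim (at x0 within D) (gt f0 t) = (1 - f0 x0 / t) powr t" by (rule tendsto_Lim[OF nt])
    then show ?thesis unfolding c_const_def ext_value_def D_def[symmetric] g(1) x0_def[symmetric] fx0
      by simp
  qed
  have P3: "((\<lambda>t. c_const (At A f0 t) (ft f0 t) (gt f0 t) (corr f0 t \<Delta>))
            \<longlongrightarrow> exp (- f0 (SOME x. x \<in> support_face A f0 \<Delta>))) at_top"
  proof -
    have e: "exp (- f0 (SOME x. x \<in> support_face A f0 \<Delta>)) = exp (- m)"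
      using SF fx0 x0_def by simp
    show ?thesis unfolding e
      by (rule Lim_transform_eventually[OF tendsto_exp_limit_at_top[of "-m"]])
         (use eventually_gt_at_top[of T] in \<open>eventually_elim, use val in simp\<close>)
  qed
  show ?thesis using P1 P2 P3 by blast
qed

end
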